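(* Let $d\geq 3$ and $1\leq k\leq d-2$, let $P\subset\mathbb R^d$ be a $k$-simplicial $d$-polytope with a simplex facet $S$ in bounded position, and let $\mathcal F,\mathcal N\subseteq\operatorname{adj}(S)$ be disjoint with $\mathcal F$ nonsimple. Then for every $v\in V_S(\mathcal F,\mathcal N;P)$ the polytope $\operatorname{conv}(P\cup\{v\})$ is $k$-simplicial.
   Context: A polytope is $k$-simplicial if all its $k$-dimensional faces are $k$-simplices. For a facet $F$ of a $d$-polytope $P\subset\mathbb R^d$ let $H_F=\{x:\langle x,a_F\rangle=\ell_F\}$ be its affine hull, oriented so that $P\subseteq\{x:\langle x,a_F\rangle\geq\ell_F\}$; put $H_F^+=\{x:\langle x,a_F\rangle>\ell_F\}$, $H_F^-=\{x:\langle x,a_F\rangle<\ell_F\}$. Two facets are adjacent if they share a ridge; $\operatorname{adj}(S)$ is the set of facets adjacent to $S$. A simplex facet is a facet combinatorially equivalent to a $(d-1)$-simplex. A facet $S$ is in bounded position if for every set of $d$ facets in $\operatorname{adj}(S)$ their hyperplanes intersect in a point of $H_S^-$. A subset $\mathcal F\subseteq\operatorname{adj}(S)$ is nonsimple if there is no pair of adjacent facets $G,G'\in\mathcal F$ having a common $(d-3)$-face with $S$. For disjoint $\mathcal F,\mathcal N\subseteq\operatorname{adj}(S)$, $V_S(\mathcal F,\mathcal N;P)$ is the set of points lying in $H_F^-$ for $F\in\mathcal N\cup\{S\}$, in $H_F$ for $F\in\mathcal F$, and in $H_F^+$ for all other facets $F$ of $P$. *)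

theory Defs
  imports "HOL-Analysis.Analysis"
begin

definition k_simplicial :: "nat \<Rightarrow> 'a::euclidean_space set \<Rightarrow> bool" where
  "k_simplicial k P \<longleftrightarrow> (\<forall>F. F face_of P \<and> aff_dim F = int k \<longrightarrow> (int k) simplex F)"

definition facet_hyp :: "'a::euclidean_space set \<Rightarrow> 'a set" where
  "facet_hyp F = affine hull F"

definition facet_plus :: "'a::euclidean_space set \<Rightarrow> 'a set \<Rightarrow> 'a set" where
  "facet_plus P F = {x. \<exists>a l. a \<noteq> 0 \<and> affine hull F = {y. a \<bullet> y = l}
       \<and> P \<subseteq> {y. a \<bullet> y \<ge> l} \<and> a \<bullet> x > l}"

definition facet_minus :: "'a::euclidean_space set \<Rightarrow> 'a set \<Rightarrow> 'a set" where
  "facet_minus P F = {x. \<exists>a l. a \<noteq> 0 \<and> affine hull F = {y. a \<bullet> y = l}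
       \<and> P \<subseteq> {y. a \<bullet> y \<ge> l} \<and> a \<bullet> x < l}"

definition adjacent_facets :: "'a::euclidean_space set \<Rightarrow> 'a set \<Rightarrow> 'a set \<Rightarrow> bool" where
  "adjacent_facets P F G \<longleftrightarrow> F facet_of P \<and> G facet_of P \<and> F \<noteq> G
     \<and> aff_dim (F \<inter> G) = aff_dim P - 2"

definition adj :: "'a::euclidean_space set \<Rightarrow> 'a set \<Rightarrow> 'a set set" where
  "adj P S = {F. adjacent_facets P S F}"

definition simplex_facet :: "'a::euclidean_space set \<Rightarrow> 'a set \<Rightarrow> bool" where
  "simplex_facet P S \<longleftrightarrow> S facet_of P \<and> (aff_dim P - 1) simplex S"

definition bounded_position :: "'a::euclidean_space set \<Rightarrow> 'a set \<Rightarrow> bool" where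
  "bounded_position P S \<longleftrightarrow>
     (\<forall>G. G \<subseteq> adj P S \<and> card G = DIM('a) \<longrightarrow>
        (\<exists>p. \<Inter> (facet_hyp ` G) = {p} \<and> p \<in> facet_minus P S))"

definition nonsimple :: "'a::euclidean_space set \<Rightarrow> 'a set \<Rightarrow> 'a set set \<Rightarrow> bool" where
  "nonsimple P S FF \<longleftrightarrow> FF \<subseteq> adj P S \<and>
     \<not> (\<exists>G\<in>FF. \<exists>G'\<in>FF. adjacent_facets P G G' \<and>
          (\<exists>K. K face_of P \<and> aff_dim K = int DIM('a) - 3 \<and> K \<subseteq> G \<and> K \<subseteq> G' \<and> K \<subseteq> S))"

definition V_region :: "'a::euclidean_space set \<Rightarrow> 'a set \<Rightarrow> 'a set set \<Rightarrow> 'a set set \<Rightarrow> 'a set" where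
  "V_region P S FF NN = {x.
     (\<forall>F \<in> insert S NN. x \<in> facet_minus P F) \<and>
     (\<forall>F \<in> FF. x \<in> facet_hyp F) \<and>
     (\<forall>F. F facet_of P \<and> F \<notin> insert S (NN \<union> FF) \<longrightarrow> x \<in> facet_plus P F)}"

end

theory Submission
  imports Defs
begin

lemma face_step:
  fixes P G :: "'a::euclidean_space set"
  assumes "polytope P" "G face_of P" "G \<noteq> {}" "aff_dim G < aff_dim P"
  shows "\<exists>H. H face_of P \<and> G \<subseteq> H \<and> aff_dim H = aff_dim G + 1"
  using assms
proof (induction "nat (aff_dim P - aff_dim G)" arbitrary: P rule: less_induct)
  case less
  have "G \<noteq> P" using less.prems by auto
  then obtain F where F: "F facet_of P" "G \<subseteq> F"
    using face_of_polyhedron_subset_facet less.prems polytope_imp_polyhedron by metis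
  have dF: "aff_dim F = aff_dim P - 1" using F facet_of_def by blast
  have GF: "G face_of F" using F less.prems face_of_subset facet_of_imp_subset by blast
  show ?case
  proof (cases "aff_dim G = aff_dim F")
    case True
    then show ?thesis using dF F less.prems by (intro exI[of _ P]) (auto simp: face_of_refl polytope_imp_convex face_of_imp_subset)
  next
    case False
    have "aff_dim G \<le> aff_dim F" using F(2) aff_dim_subset by blast
    with False have lt: "aff_dim G < aff_dim F" by simp
    have pF: "polytope F" using F face_of_polytope_polytope facet_of_imp_face_of less.prems(1) by blast
    from less.hyps[OF _ pF GF less.prems(3) lt] dF lt
    obtain H where "H face_of F" "G \<subseteq> H" "aff_dim H = aff_dim G + 1" by auto
    then show ?thesis using F face_of_trans facet_of_imp_face_of by blast
  qed
qed

lemma face_chain: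
  fixes P G :: "'a::euclidean_space set"
  assumes "polytope P" "G face_of P" "G \<noteq> {}" "aff_dim G \<le> m" "m \<le> aff_dim P"
  shows "\<exists>H. H face_of P \<and> G \<subseteq> H \<and> aff_dim H = m"
proof -
  obtain n where n: "m = aff_dim G + int n" using assms(4) by (metis zle_iff_zadd)
  have "\<forall>m. m = aff_dim G + int n \<longrightarrow> m \<le> aff_dim P \<longrightarrow> (\<exists>H. H face_of P \<and> G \<subseteq> H \<and> aff_dim H = m)"
  proof (induction n)
    case 0
    then show ?case using assms by auto
  next
    case (Suc n)
    show ?case
    proof (intro allI impI)
      fix m assume m: "m = aff_dim G + int (Suc n)" "m \<le> aff_dim P"
      then obtain H where H: "H face_of P" "G \<subseteq> H" "aff_dim H = m - 1" using Suc by force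
      have "H \<noteq> {}" using H assms(3) by auto
      moreover have "aff_dim H < aff_dim P" using H m by simp
      ultimately obtain H' where "H' face_of P" "H \<subseteq> H'" "aff_dim H' = aff_dim H + 1"
        using face_step[OF assms(1) H(1)] by blast
      then show "\<exists>H. H face_of P \<and> G \<subseteq> H \<and> aff_dim H = m" using H by (intro exI[of _ H']) auto
    qed
  qed
  then show ?thesis using n assms by blast
qed

lemma face_Int_sub:
  assumes "F face_of Q" "P \<subseteq> Q" "convex P"
  shows "(F \<inter> P) face_of P"
  using assms unfolding face_of_def by (auto simp: convex_Int; blast)

lemma facet_eq_aff:
  fixes P F :: "'a::euclidean_space set"
  assumes "polytope P" "F facet_of P"
  shows "F = P \<inter> affine hull F"
proof -
  obtain a b where ab: "a \<noteq> 0" "P \<subseteq> {x. a \<bullet> x \<le> b}" "F = P \<inter> {x. a \<bullet> x = b}"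
    using facet_of_polyhedron assms polytope_imp_polyhedron by metis
  have "affine hull F \<subseteq> {x. a \<bullet> x = b}"
    by (rule hull_minimal) (auto simp: ab affine_hyperplane)
  then show ?thesis using ab hull_subset[of F affine] by auto
qed

lemma aff_not_minus: "x \<in> affine hull F \<Longrightarrow> x \<notin> facet_minus P F"
  unfolding facet_minus_def by auto

lemma aff_not_plus: "x \<in> affine hull F \<Longrightarrow> x \<notin> facet_plus P F"
  unfolding facet_plus_def by auto

lemma affine_psubset_dim:
  fixes A B :: "'a::euclidean_space set"
  assumes "affine A" "affine B" "A \<subseteq> B" "A \<noteq> B" "A \<noteq> {}"
  shows "aff_dim A < aff_dim B"
  using aff_dim_subset[OF assms(3)] affine_dim_equal[OF assms(1,2,5,3)] assms(4) by linarith

theorem theorem2p13: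
  fixes P S :: "'a::euclidean_space set"
    and FF NN :: "'a set set"
    and k :: nat and v :: 'a
  assumes "DIM('a) \<ge> 3"
    and "1 \<le> k" and "k \<le> DIM('a) - 2"
    and "polytope P" and "aff_dim P = int DIM('a)"
    and "k_simplicial k P"
    and "simplex_facet P S"
    and "bounded_position P S"
    and "FF \<subseteq> adj P S" and "NN \<subseteq> adj P S" and "FF \<inter> NN = {}"
    and "nonsimple P S FF"
    and "v \<in> V_region P S FF NN"
  shows "k_simplicial k (convex hull (insert v P))"
proof -
  define d where "d = DIM('a)"
  note d3 = assms(1)[folded d_def]
  have kd: "int k \<le> int d - 2" using assms(3) d3 unfolding d_def by linarith
  have dP: "aff_dim P = int d" using assms(5) d_def by simp
  have convP: "convex P" using assms(4) polytope_imp_convex by blast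
  have vmS: "v \<in> facet_minus P S" and vmN: "\<And>F. F \<in> NN \<Longrightarrow> v \<in> facet_minus P F"
    and vFF: "\<And>F. F \<in> FF \<Longrightarrow> v \<in> facet_hyp F"
    and vpl: "\<And>F. F facet_of P \<Longrightarrow> F \<notin> insert S (NN \<union> FF) \<Longrightarrow> v \<in> facet_plus P F"
    using assms(13) unfolding V_region_def by auto
  have Sfacet: "S facet_of P" and Ssimp: "(aff_dim P - 1) simplex S"
    using assms(7) unfolding simplex_facet_def by auto
  let ?Q = "convex hull (insert v P)"
  have PQ: "P \<subseteq> ?Q" using hull_subset[of "insert v P" convex] by blast
  show ?thesis unfolding k_simplicial_def
  proof (intro allI impI)
    fix F assume "F face_of ?Q \<and> aff_dim F = int k"
    then have FQ: "F face_of ?Q" and dF: "aff_dim F = int k" by auto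
    have "compact (insert v P)" using assms(4) by (simp add: polytope_imp_compact)
    then obtain T where T: "T \<subseteq> insert v P" "F = convex hull T"
      using face_of_convex_hull_subset FQ by metis
    have TF: "T \<subseteq> F" using T(2) hull_subset[of T convex] by simp
    show "int k simplex F"
    proof (cases "v \<in> F")
      case False
      then have "T \<subseteq> P" using T TF by auto
      then have "F \<subseteq> P" using T convP by (simp add: hull_minimal)
      then have "F face_of P" using face_of_subset[OF FQ _ PQ] by blast
      then show ?thesis using assms(6) dF unfolding k_simplicial_def by blast
    next
      case True
      define G where "G = F \<inter> P"
      have GP: "G face_of P" unfolding G_def using face_Int_sub[OF FQ PQ convP] .
      have FG: "F = convex hull (insert v G)"
      proof
        show "F \<subseteq> convex hull (insert v G)"
        proof -
          have "T \<subseteq> insert v G" using T TF unfolding G_def by blast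
          then show ?thesis using T(2) hull_mono[of T "insert v G"] by simp
        qed
        show "convex hull (insert v G) \<subseteq> F"
          using True face_of_imp_convex[OF FQ] unfolding G_def by (simp add: hull_minimal)
      qed
      have Gne: "G \<noteq> {}"
      proof
        assume "G = {}"
        then have "F = {v}" using FG by simp
        then show False using dF assms(2) by simp
      qed
      have affFG: "aff_dim F = aff_dim (insert v G)" using FG aff_dim_convex_hull by metis
      show ?thesis
      proof (cases "v \<in> affine hull G")
        case False
        then have dG: "aff_dim G = int k - 1" using affFG dF aff_dim_insert[of v G] by simp
        obtain H where H: "H face_of P" "G \<subseteq> H" "aff_dim H = int k"
          using face_chain[OF assms(4) GP Gne, of "int k"] dG dP kd by auto
        have "int k simplex H" using H assms(6) unfolding k_simplicial_def by blast
        then obtain C where C: "\<not> affine_dependent C" "int (card C) = int k + 1" "H = convex hull C"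
          unfolding simplex_def by blast
        have "G face_of H" using face_of_subset[OF GP H(2) face_of_imp_subset[OF H(1)]] .
        then obtain c where c: "c \<subseteq> C" "G = convex hull c"
          using face_of_convex_hull_affine_independent[OF C(1)] C(3) by blast
        have ic: "\<not> affine_dependent c" using c(1) C(1) affine_dependent_subset[of c C] by blast
        have "int (card c) = aff_dim c + 1" using aff_dim_affine_independent[OF ic] by simp
        also have "\<dots> = int k" using dG c(2) aff_dim_convex_hull[of c] by simp
        finally have "(int k - 1) simplex G" using simplex_convex_hull[of c "int k - 1"] c(2) ic by simp
        then have "(int k - 1 + 1) simplex (convex hull (insert v G))"
          using simplex_insert_dimplus1 False by blast
        then show ?thesis using FG by simp
      next
        case True
        then have dG: "aff_dim G = int k" using affFG dF aff_dim_insert[of v G] by simp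
        have inFF: "F' \<in> FF" if "F' facet_of P" "G \<subseteq> F'" for F'
        proof -
          have "v \<in> affine hull F'" using True hull_mono[OF that(2), of affine] by blast
          then have "v \<notin> facet_minus P F'" "v \<notin> facet_plus P F'" using aff_not_minus[of v F' P] aff_not_plus[of v F' P] by auto
          then show ?thesis using vmS vmN[of F'] vpl[OF that(1)] by auto
        qed
        obtain R where R: "R face_of P" "G \<subseteq> R" "aff_dim R = int d - 2"
          using face_chain[OF assms(4) GP Gne, of "int d - 2"] dG dP kd by auto
        have Rne: "R \<noteq> {}" using R Gne by auto
        have RP: "R \<noteq> P" using R dP by auto
        have polyP: "polyhedron P" using assms(4) polytope_imp_polyhedron by blast
        obtain F1 where F1: "F1 facet_of P" "R \<subseteq> F1"
          by (rule face_of_polyhedron_subset_facet[OF polyP R(1) Rne RP])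
        have dF1: "aff_dim F1 = int d - 1" using F1(1) dP by (simp add: facet_of_def)
        obtain F2 where F2: "F2 facet_of P" "R \<subseteq> F2" "F2 \<noteq> F1"
        proof (rule ccontr)
          assume "\<not> thesis"
          then have "\<forall>F. F facet_of P \<and> R \<subseteq> F \<longrightarrow> F = F1" using that by blast
          then have setEq: "{F. F facet_of P \<and> R \<subseteq> F} = {F1}" using F1 by blast
          have eqR: "R = \<Inter>{F. F facet_of P \<and> R \<subseteq> F}" by (rule face_of_polyhedron[OF polyP R(1) Rne RP])
          have "R = F1" using eqR unfolding setEq by simp
          then show False using R dF1 by simp
        qed
        have dF2: "aff_dim F2 = int d - 1" using F2(1) dP by (simp add: facet_of_def)
        have I12: "(F1 \<inter> F2) face_of F1"
          using face_of_subset[OF face_of_Int[OF facet_of_imp_face_of[OF F1(1)] facet_of_imp_face_of[OF F2(1)]] inf_le1 facet_of_imp_subset[OF F1(1)]] .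
        have "F1 \<inter> F2 \<noteq> F1"
        proof
          assume "F1 \<inter> F2 = F1"
          then have "F1 \<subseteq> F2" by blast
          then have "F1 face_of F2" using face_of_subset[OF facet_of_imp_face_of[OF F1(1)] _ facet_of_imp_subset[OF F2(1)]] by blast
          moreover have "F1 \<noteq> F2" using F2(3) by auto
          ultimately have "aff_dim F1 < aff_dim F2" using face_of_aff_dim_lt[OF face_of_imp_convex[OF facet_of_imp_face_of[OF F2(1)]]] by blast
          then show False using dF1 dF2 by simp
        qed
        then have "aff_dim (F1 \<inter> F2) < aff_dim F1"
          using face_of_aff_dim_lt[OF face_of_imp_convex[OF facet_of_imp_face_of[OF F1(1)]] I12] by blast
        moreover have "aff_dim R \<le> aff_dim (F1 \<inter> F2)" using aff_dim_subset[of R "F1 \<inter> F2"] F1 F2 by blast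
        ultimately have d12: "aff_dim (F1 \<inter> F2) = int d - 2" using R dF1 by linarith
        have adj12: "adjacent_facets P F1 F2"
          unfolding adjacent_facets_def using F1 F2 d12 dP by auto
        have FF1: "F1 \<in> FF" and FF2: "F2 \<in> FF" using inFF F1 F2 R by auto
        then have "F1 \<in> adj P S" "F2 \<in> adj P S" using assms(9) by auto
        then have dS1: "aff_dim (S \<inter> F1) = int d - 2" and dS2: "aff_dim (S \<inter> F2) = int d - 2"
          unfolding adj_def adjacent_facets_def using dP by auto
        obtain B where B: "\<not> affine_dependent B" "int (card B) = int d" "S = convex hull B"
          using Ssimp dP unfolding simplex_def by auto
        have finB: "finite B" using B aff_independent_finite by blast
        have SP: "S \<subseteq> P" using Sfacet facet_of_imp_subset by blast
        have SfP: "S face_of P" using Sfacet facet_of_imp_face_of by blast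
        have S1f: "(S \<inter> F1) face_of S" using face_of_subset[OF face_of_Int[OF SfP facet_of_imp_face_of[OF F1(1)]] inf_le1 SP] .
        have S2f: "(S \<inter> F2) face_of S" using face_of_subset[OF face_of_Int[OF SfP facet_of_imp_face_of[OF F2(1)]] inf_le1 SP] .
        obtain C1 where C1: "C1 \<subseteq> B" "S \<inter> F1 = convex hull C1"
          using S1f face_of_convex_hull_affine_independent[OF B(1)] B(3) by blast
        obtain C2 where C2: "C2 \<subseteq> B" "S \<inter> F2 = convex hull C2"
          using S2f face_of_convex_hull_affine_independent[OF B(1)] B(3) by blast
        have cardC: "int (card C') = aff_dim (convex hull C') + 1" if "C' \<subseteq> B" for C'
        proof -
          have "\<not> affine_dependent C'" using affine_dependent_subset[of C' B] B(1) that by blast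
          then show ?thesis using aff_dim_affine_independent[of C'] aff_dim_convex_hull[of C'] by simp
        qed
        have "int (card C1) = int d - 1" using cardC[OF C1(1)] dS1 by (simp add: C1(2)[symmetric])
        then have cC1: "card C1 = d - 1" using d3 by linarith
        have "int (card C2) = int d - 1" using cardC[OF C2(1)] dS2 by (simp add: C2(2)[symmetric])
        then have cC2: "card C2 = d - 1" using d3 by linarith
        have False
        proof (cases "C1 = C2")
          case False
          have fin1: "finite C1" "finite C2" by (rule finite_subset[OF C1(1) finB], rule finite_subset[OF C2(1) finB])
          have "C1 \<union> C2 \<subseteq> B" using C1(1) C2(1) by auto
          then have "card (C1 \<union> C2) \<le> card B" using card_mono[OF finB] by blast
          then have "card (C1 \<union> C2) \<le> d" using B(2) by simp
          moreover have "C1 \<subset> C1 \<union> C2"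
          proof -
            have "\<not> C2 \<subseteq> C1" using card_subset_eq[OF fin1(1), of C2] cC1 cC2 False by auto
            then show ?thesis by blast
          qed
          then have "card C1 < card (C1 \<union> C2)" using psubset_card_mono fin1 by (meson finite_UnI)
          moreover have "card (C1 \<union> C2) + card (C1 \<inter> C2) = card C1 + card C2"
            using card_Un_Int[OF fin1] by simp
          ultimately have cI: "card (C1 \<inter> C2) = d - 2" using cC1 cC2 d3 by linarith
          define K where "K = convex hull (C1 \<inter> C2)"
          have "C1 \<inter> C2 \<subseteq> B" using C1(1) by auto
          then have "K face_of S" unfolding K_def B(3) using face_of_convex_hull_affine_independent[OF B(1)] by blast
          then have KP: "K face_of P" using SfP face_of_trans[of K S P] by blast
          have dK: "aff_dim K = int d - 3"
          proof -
            have "C1 \<inter> C2 \<subseteq> B" using C1(1) by auto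
            then have "int (card (C1 \<inter> C2)) = aff_dim K + 1" using cardC unfolding K_def by blast
            then show ?thesis using cI d3 by linarith
          qed
          have "K \<subseteq> S \<inter> F1" unfolding K_def C1(2) by (rule hull_mono) auto
          moreover have "K \<subseteq> S \<inter> F2" unfolding K_def C2(2) by (rule hull_mono) auto
          ultimately have "K \<subseteq> S \<inter> F1" "K \<subseteq> S \<inter> F2" by auto
          then have "\<exists>K. K face_of P \<and> aff_dim K = int DIM('a) - 3 \<and> K \<subseteq> F1 \<and> K \<subseteq> F2 \<and> K \<subseteq> S"
            using KP dK unfolding d_def by blast
          then have "adjacent_facets P F1 F2 \<and> (\<exists>K. K face_of P \<and> aff_dim K = int DIM('a) - 3 \<and> K \<subseteq> F1 \<and> K \<subseteq> F2 \<and> K \<subseteq> S)"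
            using adj12 by simp
          then have "\<exists>G\<in>FF. \<exists>G'\<in>FF. adjacent_facets P G G' \<and> (\<exists>K. K face_of P \<and> aff_dim K = int DIM('a) - 3 \<and> K \<subseteq> G \<and> K \<subseteq> G' \<and> K \<subseteq> S)"
            using FF1 FF2 by blast
          then show False using assms(12) unfolding nonsimple_def by simp
        next
          case True
          then have eq: "S \<inter> F1 = S \<inter> F2" using C1 C2 by simp
          define A where "A = affine hull F1 \<inter> affine hull F2"
          have "G \<subseteq> F1" "G \<subseteq> F2" using F1(2) F2(2) R(2) by auto
          then have vA: "v \<in> A" unfolding A_def using \<open>v \<in> affine hull G\<close> hull_mono[of G F1 affine] hull_mono[of G F2 affine] by blast
          have affA: "affine A" unfolding A_def by (simp add: affine_Int)
          have "A \<noteq> affine hull F1"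
          proof
            assume "A = affine hull F1"
            then have sub: "affine hull F1 \<subseteq> affine hull F2" unfolding A_def by blast
            have "affine hull F1 \<noteq> {}" using F1 facet_of_def by auto
            then have "affine hull F1 = affine hull F2"
              using affine_dim_equal[OF affine_affine_hull affine_affine_hull _ sub] dF1 dF2 by simp
            then have "F1 = F2" using facet_eq_aff[OF assms(4) F1(1)] facet_eq_aff[OF assms(4) F2(1)] by simp
            then show False using F2 by simp
          qed
          then have "aff_dim A < aff_dim (affine hull F1)"
            using affine_psubset_dim[OF affA affine_affine_hull] vA unfolding A_def by blast
          then have dA: "aff_dim A \<le> int d - 2" using dF1 by simp
          have sub: "affine hull (S \<inter> F1) \<subseteq> A" unfolding A_def using eq hull_mono[of "S \<inter> F1" F1 affine] hull_mono[of "S \<inter> F2" F2 affine] by auto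
          have "S \<inter> F1 \<noteq> {}" using dS1 d3 by auto
          then have "affine hull (S \<inter> F1) \<noteq> {}" by simp
          then have "affine hull (S \<inter> F1) = A"
            using affine_dim_equal[OF affine_affine_hull affA _ sub] dA dS1 aff_dim_subset[OF sub] by simp
          then have "v \<in> affine hull S" using vA hull_mono[of "S \<inter> F1" S affine] by blast
          then show False using vmS aff_not_minus[of v S P] by blast
        qed
        then show ?thesis by simp
      qed
    qed
  qed
qed

end
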